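(* Let the standing assumptions (listed in the context) hold, and suppose there are $\bar k\ge0$ and $\mu>0$ such that $\mathcal{J}(x_k)-\mathcal{J}^*\le\frac{1}{\mu}\|\nabla\mathcal{J}(x_k)\|^2$ for all $k\ge\bar k$, where $\mathcal{J}^*:=\lim_{k\to\infty}\mathcal{J}(x_k)$. Then there exists $x^*\in\mathcal{X}$ such that 1) $\nabla\mathcal{J}(x^* )=0$ and $\mathcal{J}^*=\mathcal{J}(x^* )$; 2) the iterates $(x_k)$ converge r-linearly to $x^*$; 3) the gradients $(\nabla\mathcal{J}(x_k))$ converge r-linearly to zero; 4) the function values $(\mathcal{J}(x_k))$ converge q-linearly to $\mathcal{J}(x^* )$; specifically, $\mathcal{J}(x_{k+1})-\mathcal{J}(x^* )\le\left(1-\frac{\sigma\alpha_k\mu}{\|B_k\|}\right)[\mathcal{J}(x_k)-\mathcal{J}(x^* )]$ for all $k\ge\bar k$, and the supremum of the term in round brackets is strictly smaller than 1.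
   Context: Let $\mathcal{X}$ be a Hilbert space and $\mathcal{J}:\mathcal{X}\to\mathbb{R}$. Algorithm SLBFGS (structured inverse L-BFGS): inputs $x_0\in\mathcal{X}$, $\epsilon\geq0$, $\ell\in\mathbb{N}_0$, $c_0\geq 0$, $C_0\in[c_0,\infty]$, $c_s,c_1,c_2>0$; let $\tau_0>0$. For $k=0,1,2,\ldots$: let $m=\max\{0,k-\ell\}$; choose a symmetric positive semi-definite bounded linear operator $S_k$; set $B_k^{(0)}=\tau_k I+S_k$; let $B_k$ be obtained from $B_k^{(0)}$ and the currently stored pairs $(s_j,y_j)$, $m\le j\le k-1$, by successive L-BFGS updates $B\mapsto B+\frac{yy^T}{y^Ts}-\frac{Bss^TB}{s^TBs}$; set $d_k=-B_k^{-1}\nabla\mathcal{J}(x_k)$; compute a step length $\alpha_k>0$ by a line search; set $s_k=\alpha_kd_k$, $x_{k+1}=x_k+s_k$, $y_k=\nabla\mathcal{J}(x_{k+1})-\nabla\mathcal{J}(x_k)$; store $(s_k,y_k)$ only if $y_k^Ts_k>c_s\|s_k\|^2$; if $k\ge\ell$ remove $(s_m,y_m)$ from storage; stop with output $x_{k+1}$ if $\|\nabla\mathcal{J}(x_{k+1})\|\le\epsilon$; set $z_k=y_k-S_{k+1}s_k$, $\omega^l_{k+1}=\min\{c_0,c_1\|\nabla\mathcal{J}(x_{k+1})\|^{c_2}\}$, $\omega^u_{k+1}=\max\{C_0,(c_1\|\nabla\mathcal{J}(x_{k+1})\|^{c_2})^{-1}\}$; with $P(t)=\min\{\max\{t,\omega^l_{k+1}\},\omega^u_{k+1}\}$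 and $\rho=z_k^Ts_k$ let $\tau^s=P(\rho/\|s_k\|^2)$, $\tau^g=P(\|z_k\|/\|s_k\|)$, $\tau^z=P(\|z_k\|^2/\rho)$; if $\rho>0$ choose $\tau_{k+1}\in[\tau^s,\tau^z]$, else choose $\tau_{k+1}\in[\tau^s,\tau^g]$. Line searches: Armijo with backtracking means, for fixed $\beta,\sigma\in(0,1)$, $\alpha_k$ is the largest number in $\{1,\beta,\beta^2,\ldots\}$ with $\mathcal{J}(x_{k+1})\le\mathcal{J}(x_k)+\alpha_k\sigma\nabla\mathcal{J}(x_k)^Td_k$; the Wolfe–Powell conditions are this Armijo inequality together with $\nabla\mathcal{J}(x_{k+1})^Td_k\ge\eta\nabla\mathcal{J}(x_k)^Td_k$ for fixed $\eta\in(\sigma,1)$. Let $\Omega=\{x:\mathcal{J}(x)\le\mathcal{J}(x_0)\}$ and $\Omega_\delta=\{x:\exists\hat x\in\Omega,\ \|x-\hat x\|<\delta\}$. Standing assumptions: 1) $\mathcal{J}$ is continuously differentiable and bounded below; 2) $\nabla\mathcal{J}$ is Lipschitz continuous on $\Omega$ with constant $L>0$; 3) $(\|S_k\|)$ is bounded; 4) the step sizes consistently satisfy the Armijo condition computed by backtracking, or consistently satisfy the Wolfe–Powell conditions; in the Armijo case there is $\delta>0$ such that $\mathcal{J}$ or $\nabla\mathcal{J}$ is uniformly continuous on $\Omega_\delta$; 5) $c_0=0$ is only chosen if then $\sup_k\|(B_k^{(0)})^{-1}\|<\infty$; 6) $C_0=\infty$ is only chosen if either the interval $[\tau^s,\tau^z]$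 is replaced by $[\tau^s,\tau^g]$, or $\mathcal{J}$ is twice continuously differentiable, $\int_0^1\nabla^2\mathcal{J}(x_k+ts_k)\,dt-S_{k+1}$ is symmetric positive semi-definite for all $k$ with bounded norms; 7) the algorithm is run with $\epsilon=0$ and generates an infinite sequence $(x_k)$; 8) $(\|B_k\|)$ and $(\|B_k^{-1}\|)$ are bounded; 9) if Armijo backtracking is used, there is $\delta>0$ such that $\mathcal{J}$ is uniformly continuous on $\Omega_\delta$ or $\nabla\mathcal{J}$ is Lipschitz continuous on $\Omega_\delta$. *)

theory Defs
  imports "HOL-Analysis.Analysis"
begin

definition sym_psd :: "('a::real_inner \<Rightarrow> 'a) \<Rightarrow> bool" where
  "sym_psd S \<longleftrightarrow> bounded_linear S \<and> (\<forall>v w. inner (S v) w = inner v (S w)) \<and> (\<forall>v. 0 \<le> inner (S v) v)"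

definition lbfgs_update :: "('a::real_inner \<Rightarrow> 'a) \<Rightarrow> 'a \<Rightarrow> 'a \<Rightarrow> ('a \<Rightarrow> 'a)" where
  "lbfgs_update B s y = (\<lambda>v. B v + (inner y v / inner y s) *\<^sub>R y - (inner (B s) v / inner s (B s)) *\<^sub>R B s)"

definition stored_indices :: "nat \<Rightarrow> nat \<Rightarrow> real \<Rightarrow> (nat \<Rightarrow> 'a::real_inner) \<Rightarrow> (nat \<Rightarrow> 'a) \<Rightarrow> nat list" where
  "stored_indices ell k cs s y = filter (\<lambda>j. inner (y j) (s j) > cs * (norm (s j))\<^sup>2) [max 0 (k - ell)..<k]"

definition lbfgs_op :: "('a::real_inner \<Rightarrow> 'a) \<Rightarrow> nat list \<Rightarrow> (nat \<Rightarrow> 'a) \<Rightarrow> (nat \<Rightarrow> 'a) \<Rightarrow> ('a \<Rightarrow> 'a)" where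
  "lbfgs_op B0 js s y = foldl (\<lambda>B j. lbfgs_update B (s j) (y j)) B0 js"

definition proj_tau :: "real \<Rightarrow> ereal \<Rightarrow> real \<Rightarrow> ereal" where
  "proj_tau lo hi t = min (max (ereal t) (ereal lo)) hi"

definition omega_l :: "real \<Rightarrow> real \<Rightarrow> real \<Rightarrow> 'a::real_normed_vector \<Rightarrow> real" where
  "omega_l c0 c1 c2 g = min c0 (c1 * norm g powr c2)"

definition omega_u :: "ereal \<Rightarrow> real \<Rightarrow> real \<Rightarrow> 'a::real_normed_vector \<Rightarrow> ereal" where
  "omega_u C0 c1 c2 g = max C0 (ereal (inverse (c1 * norm g powr c2)))"

text \<open>Admissible choice of tau_{k+1}, given gradient g = grad J(x_{k+1}), s = s_k and z = z_k.
  If use_g holds, the interval [tau^s, tau^z] is replaced by [tau^s, tau^g].\<close>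
definition tau_admissible ::
  "bool \<Rightarrow> real \<Rightarrow> ereal \<Rightarrow> real \<Rightarrow> real \<Rightarrow> 'a::real_inner \<Rightarrow> 'a \<Rightarrow> 'a \<Rightarrow> real \<Rightarrow> bool" where
  "tau_admissible use_g c0 C0 c1 c2 g s z tau \<longleftrightarrow>
     (let lo = omega_l c0 c1 c2 g; hi = omega_u C0 c1 c2 g; rho = inner z s;
          ts = proj_tau lo hi (rho / (norm s)\<^sup>2);
          tg = proj_tau lo hi (norm z / norm s);
          tz = proj_tau lo hi ((norm z)\<^sup>2 / rho)
      in if rho > 0 \<and> \<not> use_g then ts \<le> ereal tau \<and> ereal tau \<le> tz
         else ts \<le> ereal tau \<and> ereal tau \<le> tg)"

definition armijo_cond :: "('a::real_inner \<Rightarrow> real) \<Rightarrow> ('a \<Rightarrow> 'a) \<Rightarrow> real \<Rightarrow> 'a \<Rightarrow> 'a \<Rightarrow> real \<Rightarrow> bool" where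
  "armijo_cond J G \<sigma> x d \<alpha> \<longleftrightarrow> J (x + \<alpha> *\<^sub>R d) \<le> J x + \<alpha> * \<sigma> * inner (G x) d"

definition armijo_backtracking ::
  "('a::real_inner \<Rightarrow> real) \<Rightarrow> ('a \<Rightarrow> 'a) \<Rightarrow> real \<Rightarrow> real \<Rightarrow> 'a \<Rightarrow> 'a \<Rightarrow> real \<Rightarrow> bool" where
  "armijo_backtracking J G \<beta> \<sigma> x d \<alpha> \<longleftrightarrow>
     (\<exists>i::nat. \<alpha> = \<beta> ^ i \<and> armijo_cond J G \<sigma> x d \<alpha> \<and> (\<forall>i'<i. \<not> armijo_cond J G \<sigma> x d (\<beta> ^ i')))"

definition wolfe_powell ::
  "('a::real_inner \<Rightarrow> real) \<Rightarrow> ('a \<Rightarrow> 'a) \<Rightarrow> real \<Rightarrow> real \<Rightarrow> 'a \<Rightarrow> 'a \<Rightarrow> real \<Rightarrow> bool" where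
  "wolfe_powell J G \<sigma> \<eta> x d \<alpha> \<longleftrightarrow>
     0 < \<alpha> \<and> armijo_cond J G \<sigma> x d \<alpha> \<and> inner (G (x + \<alpha> *\<^sub>R d)) d \<ge> \<eta> * inner (G x) d"

definition nbhd :: "'a::metric_space set \<Rightarrow> real \<Rightarrow> 'a set" where
  "nbhd \<Omega> \<delta> = {x. \<exists>xh\<in>\<Omega>. dist x xh < \<delta>}"

definition r_linear :: "(nat \<Rightarrow> 'a::real_normed_vector) \<Rightarrow> 'a \<Rightarrow> bool" where
  "r_linear a l \<longleftrightarrow> (\<exists>C q. 0 \<le> q \<and> q < 1 \<and> (\<forall>k. norm (a k - l) \<le> C * q ^ k))"

end

theory Submission
  imports Defs
begin

lemma psd_quad:
  assumes "sym_psd B"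
  shows "inner (B (u + t *\<^sub>R v)) (u + t *\<^sub>R v) = inner (B u) u + 2 * t * inner (B u) v + t\<^sup>2 * inner (B v) v"
proof -
  interpret bounded_linear B using assms unfolding sym_psd_def by blast
  have sym: "inner (B v) u = inner (B u) v"
    using assms unfolding sym_psd_def by (metis inner_commute)
  show ?thesis
    by (simp add: add scale inner_add_left inner_add_right sym power2_eq_square algebra_simps)
qed

lemma psd_cs:
  assumes "sym_psd B"
  shows "(inner (B u) v)\<^sup>2 \<le> inner (B u) u * inner (B v) v"
proof -
  have nn: "\<And>t. 0 \<le> inner (B u) u + 2 * t * inner (B u) v + t\<^sup>2 * inner (B v) v"
    using psd_quad[OF assms] assms unfolding sym_psd_def by metis
  have a: "0 \<le> inner (B u) u" and c: "0 \<le> inner (B v) v"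
    using assms unfolding sym_psd_def by auto
  show ?thesis
  proof (cases "inner (B v) v = 0")
    case True
    show ?thesis
    proof (cases "inner (B u) v = 0")
      case True then show ?thesis using a c by simp
    next
      case False
      have "0 \<le> inner (B u) u + 2 * (-(inner (B u) u + 1) / (2 * inner (B u) v)) * inner (B u) v"
        using nn[of "-(inner (B u) u + 1) / (2 * inner (B u) v)"] \<open>inner (B v) v = 0\<close> by simp
      also have "\<dots> = -1" using False by (simp add: field_simps)
      finally show ?thesis by simp
    qed
  next
    case False
    then have cp: "inner (B v) v > 0" using c by simp
    have "0 \<le> inner (B u) u + 2 * (- inner (B u) v / inner (B v) v) * inner (B u) v
              + (- inner (B u) v / inner (B v) v)\<^sup>2 * inner (B v) v"
      using nn by blast
    also have "\<dots> = inner (B u) u - (inner (B u) v)\<^sup>2 / inner (B v) v"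
      using cp by (simp add: field_simps power2_eq_square)
    finally show ?thesis using cp by (simp add: field_simps)
  qed
qed

lemma psd_norm_sq:
  assumes "sym_psd B"
  shows "(norm (B w))\<^sup>2 \<le> onorm B * inner (B w) w"
proof -
  have bl: "bounded_linear B" using assms unfolding sym_psd_def by blast
  have sym: "inner (B w) (B w) = inner (B (B w)) w"
    using assms unfolding sym_psd_def by (metis inner_commute)
  have "((norm (B w))\<^sup>2)\<^sup>2 = (inner (B (B w)) w)\<^sup>2"
    by (simp add: power2_norm_eq_inner sym)
  also have "\<dots> = (inner (B w) (B w))\<^sup>2"
    using assms unfolding sym_psd_def by (metis inner_commute)
  also have "\<dots> \<le> inner (B w) w * inner (B (B w)) (B w)"
    using psd_cs[OF assms, of w "B w"] by simp
  also have "inner (B (B w)) (B w) \<le> onorm B * (norm (B w))\<^sup>2"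
  proof -
    have "inner (B (B w)) (B w) \<le> norm (B (B w)) * norm (B w)" by (rule norm_cauchy_schwarz)
    also have "\<dots> \<le> onorm B * norm (B w) * norm (B w)"
      by (intro mult_right_mono onorm[OF bl]) simp
    finally show ?thesis by (simp add: power2_eq_square mult.assoc)
  qed
  then have "inner (B w) w * inner (B (B w)) (B w) \<le> inner (B w) w * (onorm B * (norm (B w))\<^sup>2)"
    using assms unfolding sym_psd_def by (intro mult_left_mono) auto
  finally have *: "((norm (B w))\<^sup>2)\<^sup>2 \<le> (onorm B * inner (B w) w) * (norm (B w))\<^sup>2"
    by (simp add: algebra_simps)
  show ?thesis
  proof (cases "norm (B w) = 0")
    case True then show ?thesis using assms onorm_pos_le[OF bl] unfolding sym_psd_def by auto
  next
    case False
    then have p: "(norm (B w))\<^sup>2 > 0" by simp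
    have "(norm (B w))\<^sup>2 * (norm (B w))\<^sup>2 \<le> (onorm B * inner (B w) w) * (norm (B w))\<^sup>2"
      using * by (simp add: power2_eq_square[of "(norm (B w))\<^sup>2"])
    then show ?thesis by (rule mult_right_le_imp_le[OF _ p])
  qed
qed

lemma update_psd:
  assumes "sym_psd B" "0 \<le> inner y s"
  shows "sym_psd (lbfgs_update B s y)"
proof -
  have bl: "bounded_linear B" and sym: "\<And>v w. inner (B v) w = inner v (B w)"
    and pos: "\<And>v. 0 \<le> inner (B v) v"
    using assms unfolding sym_psd_def by auto
  interpret bounded_linear B by (rule bl)
  have "bounded_linear (lbfgs_update B s y)"
    unfolding lbfgs_update_def
    by (intro bounded_linear_add bounded_linear_sub bl
        bounded_linear_compose[OF bounded_linear_scaleR_left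
          bounded_linear_compose[OF bounded_linear_divide bounded_linear_inner_right]]
        bounded_linear_compose[OF bounded_linear_scaleR_left
          bounded_linear_compose[OF bounded_linear_divide bounded_linear_inner_right]])
  moreover have "inner (lbfgs_update B s y v) w = inner v (lbfgs_update B s y w)" for v w
  proof -
    have sym2: "inner w (B v) = inner v (B w)" by (metis sym inner_commute)
    show ?thesis
    unfolding lbfgs_update_def
    by (simp add: inner_add_left inner_add_right inner_diff_left inner_diff_right sym
        algebra_simps inner_commute sym2)
  qed
  moreover have "0 \<le> inner (lbfgs_update B s y v) v" for v
  proof -
    have e: "inner (lbfgs_update B s y v) v = inner (B v) v + (inner y v)\<^sup>2 / inner y s
             - (inner (B s) v)\<^sup>2 / inner s (B s)"
      unfolding lbfgs_update_def
      by (simp add: inner_add_left inner_diff_left inner_add_right inner_diff_right power2_eq_square inner_commute)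
    have t2: "0 \<le> (inner y v)\<^sup>2 / inner y s" using assms(2) by simp
    have t3: "(inner (B s) v)\<^sup>2 / inner s (B s) \<le> inner (B v) v"
    proof (cases "inner s (B s) = 0")
      case True then show ?thesis using pos by simp
    next
      case False
      have "inner s (B s) > 0" using False pos[of s] by (simp add: inner_commute)
      moreover have "(inner (B s) v)\<^sup>2 \<le> inner s (B s) * inner (B v) v"
        using psd_cs[OF assms(1), of s v] by (simp add: inner_commute)
      ultimately show ?thesis by (simp add: divide_le_eq mult.commute)
    qed
    show ?thesis using e t2 t3 by linarith
  qed
  ultimately show ?thesis unfolding sym_psd_def by blast
qed

lemma lbfgs_op_psd:
  assumes "sym_psd B0" "\<forall>j\<in>set js. 0 \<le> inner (y j) (s j)"
  shows "sym_psd (lbfgs_op B0 js s y)"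
  using assms
proof (induction js arbitrary: B0)
  case Nil then show ?case by (simp add: lbfgs_op_def)
next
  case (Cons j js)
  have "sym_psd (lbfgs_update B0 (s j) (y j))"
    using Cons.prems by (intro update_psd) auto
  then show ?case using Cons.IH[of "lbfgs_update B0 (s j) (y j)"] Cons.prems
    by (simp add: lbfgs_op_def)
qed

lemma init_psd:
  assumes "0 \<le> \<tau>" "sym_psd S"
  shows "sym_psd (\<lambda>v. \<tau> *\<^sub>R v + S v)"
proof -
  have bl: "bounded_linear S" using assms unfolding sym_psd_def by blast
  have "bounded_linear (\<lambda>v. \<tau> *\<^sub>R v + S v)"
    by (intro bounded_linear_add bl bounded_linear_scaleR_right bounded_linear_ident)
  then show ?thesis using assms unfolding sym_psd_def
    by (simp add: inner_add_left inner_add_right inner_commute)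
qed

lemma tau_nonneg:
  assumes "tau_admissible use_g c0 C0 c1 c2 g s z tau" "0 \<le> c0" "ereal c0 \<le> C0" "0 < c1"
  shows "0 \<le> tau"
proof -
  define lo where "lo = omega_l c0 c1 c2 g"
  define hi where "hi = omega_u C0 c1 c2 g"
  have lo0: "0 \<le> lo" unfolding lo_def omega_l_def using assms by auto
  have lohi: "ereal lo \<le> hi" unfolding lo_def hi_def omega_l_def omega_u_def
    using assms(3) by (meson min.cobounded1 max.cobounded1 order_trans ereal_less_eq(3))
  have "\<And>t. ereal lo \<le> proj_tau lo hi t" unfolding proj_tau_def using lohi by auto
  moreover have "\<exists>t. proj_tau lo hi t \<le> ereal tau"
    using assms(1) unfolding tau_admissible_def Let_def lo_def hi_def by (auto split: if_splits)
  ultimately have "ereal lo \<le> ereal tau" by (meson order_trans)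
  then show ?thesis using lo0 by simp
qed

lemma min_crit:
  fixes f f' :: "real \<Rightarrow> real"
  assumes a: "0 < a" and der: "\<forall>t\<in>{0..a}. (f has_real_derivative f' t) (at t)"
    and f0: "f 0 = 0" and d0: "f' 0 < 0" and fa: "f a > 0"
  shows "\<exists>\<xi>. 0 < \<xi> \<and> \<xi> < a \<and> f \<xi> < 0 \<and> f' \<xi> = 0"
proof -
  have "continuous_on {0..a} f"
    using der by (intro continuous_at_imp_continuous_on) (auto intro: DERIV_isCont)
  then obtain \<xi> where xi: "\<xi> \<in> {0..a}" "\<forall>t\<in>{0..a}. f \<xi> \<le> f t"
    using continuous_attains_inf[of "{0..a}" f] a by auto
  obtain \<delta> where dl: "\<delta> > 0" "\<forall>h>0. h < \<delta> \<longrightarrow> f 0 > f (0 + h)"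
  proof -
    have "(f has_real_derivative f' 0) (at 0)" using der a by auto
    from DERIV_neg_dec_right[OF this d0] show ?thesis using that by auto
  qed
  define h where "h = min (\<delta>/2) (a/2)"
  have h: "0 < h" "h < \<delta>" "h \<le> a" using dl a unfolding h_def by auto
  have "f h < 0" using dl h f0 by auto
  moreover have "f \<xi> \<le> f h" using xi(2) h by auto
  ultimately have fxi: "f \<xi> < 0" by linarith
  then have "\<xi> \<noteq> 0" "\<xi> \<noteq> a" using f0 fa by auto
  then have xi2: "0 < \<xi>" "\<xi> < a" using xi by auto
  have "f' \<xi> = 0"
  proof (rule DERIV_local_min)
    show "(f has_real_derivative f' \<xi>) (at \<xi>)" using der xi by auto
    show "0 < min \<xi> (a - \<xi>)" using xi2 by auto
    show "\<forall>y. \<bar>\<xi> - y\<bar> < min \<xi> (a - \<xi>) \<longrightarrow> f \<xi> \<le> f y"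
    proof (intro allI impI)
      fix y assume "\<bar>\<xi> - y\<bar> < min \<xi> (a - \<xi>)"
      then have "y \<in> {0..a}" by (auto simp: abs_if split: if_splits)
      then show "f \<xi> \<le> f y" using xi(2) by auto
    qed
  qed
  then show ?thesis using xi2 fxi by blast
qed

lemma r_linear_eventually:
  fixes a :: "nat \<Rightarrow> 'a::real_normed_vector"
  assumes r: "0 < r" "r < 1" and b: "\<forall>k\<ge>K. norm (a k - l) \<le> C * r ^ k"
  shows "r_linear a l"
proof -
  define C' where "C' = \<bar>C\<bar> + (\<Sum>k<K. norm (a k - l) / r ^ k)"
  have "norm (a k - l) \<le> C' * r ^ k" for k
  proof (cases "k < K")
    case True
    have "norm (a k - l) / r ^ k \<le> (\<Sum>k<K. norm (a k - l) / r ^ k)"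
      using True r by (intro member_le_sum) auto
    also have "\<dots> \<le> C'" unfolding C'_def by simp
    finally show ?thesis using r by (simp add: divide_le_eq)
  next
    case False
    then have "norm (a k - l) \<le> C * r ^ k" using b by auto
    also have "\<dots> \<le> C' * r ^ k"
    proof -
      have "0 \<le> (\<Sum>k<K. norm (a k - l) / r ^ k)" using r by (intro sum_nonneg) auto
      then have "C \<le> C'" unfolding C'_def by linarith
      then show ?thesis using r by (intro mult_right_mono) auto
    qed
    finally show ?thesis .
  qed
  then show ?thesis unfolding r_linear_def using r by (intro exI[of _ C'] exI[of _ r]) auto
qed


lemma line_deriv:
  assumes "\<forall>z. (J has_derivative (\<lambda>h. inner (G z) h)) (at z)"
  shows "((\<lambda>t. J (x + t *\<^sub>R D)) has_real_derivative inner (G (x + t *\<^sub>R D)) D) (at t)"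
proof -
  have l: "((\<lambda>t. x + t *\<^sub>R D) has_derivative (\<lambda>h. h *\<^sub>R D)) (at t)"
    by (auto intro!: derivative_eq_intros)
  have "((\<lambda>t. J (x + t *\<^sub>R D)) has_derivative (\<lambda>h. inner (G (x + t *\<^sub>R D)) (h *\<^sub>R D))) (at t)"
    using has_derivative_compose[OF l assms[rule_format, of "x + t *\<^sub>R D"]] by simp
  moreover have "(\<lambda>h. inner (G (x + t *\<^sub>R D)) (h *\<^sub>R D)) = (*) (inner (G (x + t *\<^sub>R D)) D)"
    by (auto simp: mult.commute)
  ultimately show ?thesis by (simp add: has_field_derivative_def)
qed

lemma s_bound_aux:
  fixes a N E Gn mu c MB :: real
  assumes "0 < a" "0 < N" "0 < E" "0 < mu" "0 < MB" "0 \<le> c" "a * N\<^sup>2 \<le> c * E"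
    "0 \<le> Gn" "Gn \<le> MB * N" "mu * E \<le> Gn\<^sup>2"
  shows "(a * N)\<^sup>2 \<le> (MB\<^sup>2 * c\<^sup>2 / mu) * E"
proof -
  have "(a * N)\<^sup>2 * (mu * E) \<le> (a * N)\<^sup>2 * Gn\<^sup>2"
    using assms(10) by (intro mult_left_mono) auto
  also have "\<dots> \<le> (a * N)\<^sup>2 * (MB * N)\<^sup>2"
    using assms(8,9) by (intro mult_left_mono power_mono) auto
  also have "\<dots> = MB\<^sup>2 * (a * N\<^sup>2)\<^sup>2" by (simp add: power2_eq_square algebra_simps)
  also have "\<dots> \<le> MB\<^sup>2 * (c * E)\<^sup>2"
    using assms by (intro mult_left_mono power_mono) auto
  finally have "((a * N)\<^sup>2 * mu) * E \<le> (MB\<^sup>2 * c\<^sup>2 * E) * E"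
    by (simp add: power2_eq_square algebra_simps)
  then have "(a * N)\<^sup>2 * mu \<le> MB\<^sup>2 * c\<^sup>2 * E" using assms(3) by (rule mult_right_le_imp_le)
  then show ?thesis using assms(4) by (simp add: field_simps)
qed

theorem theorem4p12:
  fixes J :: "'a::{real_inner, complete_space} \<Rightarrow> real"
    and G :: "'a \<Rightarrow> 'a"
    and x d s y :: "nat \<Rightarrow> 'a"
    and \<alpha> \<tau> :: "nat \<Rightarrow> real"
    and S B :: "nat \<Rightarrow> 'a \<Rightarrow> 'a"
    and ell :: nat
    and c0 cs c1 c2 L \<beta> \<sigma> \<eta> \<mu> :: real
    and C0 :: ereal
    and use_g armijo :: bool
    and kbar :: nat
  assumes params: "0 \<le> c0" "ereal c0 \<le> C0" "0 < cs" "0 < c1" "0 < c2" "0 < \<tau> 0"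
    and ls_params: "0 < \<beta>" "\<beta> < 1" "0 < \<sigma>" "\<sigma> < 1" "armijo \<or> (\<sigma> < \<eta> \<and> \<eta> < 1)"
    \<comment> \<open>the algorithm SLBFGS (with \<epsilon> = 0)\<close>
    and S_psd: "\<forall>k. sym_psd (S k)"
    and B_def: "\<forall>k. B k = lbfgs_op (\<lambda>v. \<tau> k *\<^sub>R v + S k v) (stored_indices ell k cs s y) s y"
    and B_bij: "\<forall>k. bij (B k)"
    and d_def: "\<forall>k. B k (d k) = - G (x k)"
    and linesearch: "if armijo then (\<forall>k. armijo_backtracking J G \<beta> \<sigma> (x k) (d k) (\<alpha> k))
                     else (\<forall>k. wolfe_powell J G \<sigma> \<eta> (x k) (d k) (\<alpha> k))"
    and s_def: "\<forall>k. s k = \<alpha> k *\<^sub>R d k"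
    and x_step: "\<forall>k. x (Suc k) = x k + s k"
    and y_def: "\<forall>k. y k = G (x (Suc k)) - G (x k)"
    and no_stop: "\<forall>k. G (x (Suc k)) \<noteq> 0"
    and tau_choice: "\<forall>k. tau_admissible use_g c0 C0 c1 c2 (G (x (Suc k))) (s k)
                          (y k - S (Suc k) (s k)) (\<tau> (Suc k))"
    \<comment> \<open>standing assumption 1\<close>
    and J_grad: "\<forall>z. (J has_derivative (\<lambda>h. inner (G z) h)) (at z)"
    and G_cont: "continuous_on UNIV G"
    and J_bdd: "bdd_below (range J)"
    \<comment> \<open>standing assumption 2\<close>
    and L_pos: "0 < L"
    and G_lip: "\<forall>u\<in>{z. J z \<le> J (x 0)}. \<forall>v\<in>{z. J z \<le> J (x 0)}. norm (G u - G v) \<le> L * norm (u - v)"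
    \<comment> \<open>standing assumption 3\<close>
    and S_bdd: "\<exists>M. \<forall>k. onorm (S k) \<le> M"
    \<comment> \<open>standing assumptions 4 and 9 (Armijo case)\<close>
    and unif4: "armijo \<longrightarrow> (\<exists>\<delta>>0. uniformly_continuous_on (nbhd {z. J z \<le> J (x 0)} \<delta>) J
                                 \<or> uniformly_continuous_on (nbhd {z. J z \<le> J (x 0)} \<delta>) G)"
    and unif9: "armijo \<longrightarrow> (\<exists>\<delta>>0. uniformly_continuous_on (nbhd {z. J z \<le> J (x 0)} \<delta>) J
                                 \<or> (\<exists>L'. \<forall>u\<in>nbhd {z. J z \<le> J (x 0)} \<delta>. \<forall>v\<in>nbhd {z. J z \<le> J (x 0)} \<delta>.
                                        norm (G u - G v) \<le> L' * norm (u - v)))"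
    \<comment> \<open>standing assumption 5\<close>
    and c0_zero: "c0 = 0 \<longrightarrow> (\<forall>k. bij (\<lambda>v. \<tau> k *\<^sub>R v + S k v)) \<and>
                   (\<exists>M. \<forall>k v. norm (inv (\<lambda>v. \<tau> k *\<^sub>R v + S k v) v) \<le> M * norm v)"
    \<comment> \<open>standing assumption 6\<close>
    and C0_inf: "C0 = \<infinity> \<longrightarrow> use_g \<or>
          (\<exists>H :: 'a \<Rightarrow> ('a \<Rightarrow>\<^sub>L 'a).
              (\<forall>z. (G has_derivative blinfun_apply (H z)) (at z)) \<and> continuous_on UNIV H \<and>
              (\<forall>k. sym_psd (\<lambda>v. blinfun_apply (integral {0..1::real} (\<lambda>t. H (x k + t *\<^sub>R s k))) v
                                   - S (Suc k) v)) \<and>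
              (\<exists>M. \<forall>k. onorm (\<lambda>v. blinfun_apply (integral {0..1::real} (\<lambda>t. H (x k + t *\<^sub>R s k))) v
                                   - S (Suc k) v) \<le> M))"
    \<comment> \<open>standing assumption 8\<close>
    and B_bdd: "\<exists>M. \<forall>k. onorm (B k) \<le> M"
    and Binv_bdd: "\<exists>M. \<forall>k v. norm (inv (B k) v) \<le> M * norm v"
    \<comment> \<open>hypothesis of the theorem\<close>
    and mu_pos: "0 < \<mu>"
    and PL: "\<forall>k\<ge>kbar. J (x k) - lim (\<lambda>k. J (x k)) \<le> (1 / \<mu>) * (norm (G (x k)))\<^sup>2"
  shows "\<exists>xs. G xs = 0 \<and> lim (\<lambda>k. J (x k)) = J xs
           \<and> r_linear x xs
           \<and> r_linear (\<lambda>k. G (x k)) 0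
           \<and> (\<forall>k\<ge>kbar. J (x (Suc k)) - J xs
                 \<le> (1 - \<sigma> * \<alpha> k * \<mu> / onorm (B k)) * (J (x k) - J xs))
           \<and> (SUP k\<in>{kbar..}. 1 - \<sigma> * \<alpha> k * \<mu> / onorm (B k)) < 1"
proof -
  have tau_nn: "0 \<le> \<tau> k" for k
  proof (cases k)
    case 0 then show ?thesis using params by simp
  next
    case (Suc k') then show ?thesis
      using tau_nonneg[OF tau_choice[rule_format, of k'] params(1,2,4)] by simp
  qed
  have Bpsd: "sym_psd (B k)" for k
  proof -
    have "\<forall>j\<in>set (stored_indices ell k cs s y). 0 \<le> inner (y j) (s j)"
    proof
      fix j assume "j \<in> set (stored_indices ell k cs s y)"
      then have "inner (y j) (s j) > cs * (norm (s j))\<^sup>2" unfolding stored_indices_def by auto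
      moreover have "0 \<le> cs * (norm (s j))\<^sup>2" using params(3) by simp
      ultimately show "0 \<le> inner (y j) (s j)" by linarith
    qed
    then show ?thesis using B_def lbfgs_op_psd init_psd[OF tau_nn S_psd[rule_format]] by metis
  qed
  have Bbl: "bounded_linear (B k)" for k using Bpsd[of k] unfolding sym_psd_def by blast
  obtain M0 where M0: "\<forall>k v. norm (inv (B k) v) \<le> M0 * norm v" using Binv_bdd by blast
  define M where "M = max M0 1"
  have Mpos: "M > 0" unfolding M_def by simp
  have Minv: "norm (inv (B k) v) \<le> M * norm v" for k v
    using M0[rule_format, of k v] unfolding M_def
    by (meson max.cobounded1 mult_right_mono norm_ge_zero order_trans)
  obtain MB0 where MB0: "\<forall>k. onorm (B k) \<le> MB0" using B_bdd by blast
  define MB where "MB = max MB0 1"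
  have MBpos: "MB > 0" unfolding MB_def by simp
  have MB: "onorm (B k) \<le> MB" for k using MB0 unfolding MB_def by (meson max.cobounded1 order_trans)
  define gd where "gd k = inner (G (x k)) (d k)" for k
  have invd: "inv (B k) (B k v) = v" for k v using B_bij bij_is_inj inv_f_f by metis
  have Bd: "B k (d k) = - G (x k)" for k using d_def by blast
  have gd_eq: "gd k = - inner (B k (d k)) (d k)" for k unfolding gd_def Bd by simp
  have gd_np: "gd k \<le> 0" for k using Bpsd[of k] unfolding gd_eq sym_psd_def by auto
  have g_sq: "(norm (G (x k)))\<^sup>2 \<le> onorm (B k) * (- gd k)" for k
    using psd_norm_sq[OF Bpsd[of k], of "d k"] unfolding gd_eq Bd by simp
  have g_sqM: "(norm (G (x k)))\<^sup>2 \<le> MB * (- gd k)" for k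
    using g_sq[of k] MB[of k] gd_np[of k] by (meson mult_right_mono neg_0_le_iff_le order_trans)
  have nd: "norm (d k) \<le> M * norm (G (x k))" for k
  proof -
    have "norm (d k) = norm (inv (B k) (B k (d k)))" by (simp only: invd)
    also have "\<dots> \<le> M * norm (B k (d k))" by (rule Minv)
    finally show ?thesis by (simp add: Bd)
  qed
  have d_sq: "(norm (d k))\<^sup>2 \<le> M\<^sup>2 * MB * (- gd k)" for k
  proof -
    have "(norm (d k))\<^sup>2 \<le> (M * norm (G (x k)))\<^sup>2" using nd[of k] by (simp add: power_mono)
    also have "\<dots> = M\<^sup>2 * (norm (G (x k)))\<^sup>2" by (simp add: power_mult_distrib)
    also have "\<dots> \<le> M\<^sup>2 * (MB * (- gd k))" using g_sqM[of k] by (intro mult_left_mono) auto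
    finally show ?thesis by (simp add: mult.assoc)
  qed
  have gB: "norm (G (x k)) \<le> MB * norm (d k)" for k
  proof -
    have "norm (G (x k)) = norm (B k (d k))" unfolding Bd by simp
    also have "\<dots> \<le> onorm (B k) * norm (d k)" by (rule onorm[OF Bbl])
    also have "\<dots> \<le> MB * norm (d k)" using MB[of k] by (simp add: mult_right_mono)
    finally show ?thesis .
  qed
  have ls: "0 < \<alpha> k \<and> J (x (Suc k)) \<le> J (x k) + \<alpha> k * \<sigma> * gd k" for k
  proof (cases armijo)
    case True
    then have "armijo_backtracking J G \<beta> \<sigma> (x k) (d k) (\<alpha> k)" using linesearch by simp
    then obtain i where "\<alpha> k = \<beta> ^ i" "armijo_cond J G \<sigma> (x k) (d k) (\<alpha> k)"
      unfolding armijo_backtracking_def by blast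
    then show ?thesis using ls_params x_step s_def unfolding armijo_cond_def gd_def by simp
  next
    case False
    then have "wolfe_powell J G \<sigma> \<eta> (x k) (d k) (\<alpha> k)" using linesearch by simp
    then show ?thesis using x_step s_def unfolding wolfe_powell_def armijo_cond_def gd_def by simp
  qed
  have apos: "0 < \<alpha> k" for k using ls by blast
  have desc: "J (x (Suc k)) \<le> J (x k)" for k
  proof -
    have "\<alpha> k * \<sigma> * gd k \<le> 0" using apos[of k] ls_params gd_np[of k]
      by (simp add: mult_nonneg_nonpos)
    then show ?thesis using ls[of k] by linarith
  qed
  have inO: "J (x k) \<le> J (x 0)" for k
  proof (induction k)
    case (Suc k) then show ?case using desc[of k] by linarith
  qed simp
  have gnz: "G (x k) \<noteq> 0" for k
  proof (cases k)
    case 0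
    show ?thesis
    proof
      assume g0: "G (x k) = 0"
      then have "gd k = 0" unfolding gd_def by simp
      then have "d k = 0" using d_sq[of k] by simp
      then have "x (Suc k) = x k" using x_step s_def by simp
      then show False using no_stop g0 by metis
    qed
  next
    case (Suc k') then show ?thesis using no_stop by simp
  qed
  have dnz: "d k \<noteq> 0" for k using gnz[of k] Bd[of k] linear_0[OF bounded_linear.linear[OF Bbl]] by force
  have gd_neg: "gd k < 0" for k
  proof -
    have "0 < (norm (d k))\<^sup>2" using dnz[of k] by simp
    then have "0 < M\<^sup>2 * MB * (- gd k)" using d_sq[of k] by linarith
    then show ?thesis using gd_np[of k] by (cases "gd k = 0") auto
  qed
  define \<Omega> where "\<Omega> = {z. J z \<le> J (x 0)}"
  have xO: "x k \<in> \<Omega>" for k unfolding \<Omega>_def using inO by simp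
  have lip: "inner (G v - G u) D \<le> L * norm (v - u) * norm D" if "u \<in> \<Omega>" "v \<in> \<Omega>" for u v D
  proof -
    have "inner (G v - G u) D \<le> norm (G v - G u) * norm D" by (rule norm_cauchy_schwarz)
    also have "\<dots> \<le> L * norm (v - u) * norm D"
      using G_lip that unfolding \<Omega>_def by (intro mult_right_mono) auto
    finally show ?thesis .
  qed
  have key_bound: "P / (L * (M\<^sup>2 * MB)) \<le> t"
    if "P * (norm (d k))\<^sup>2 / (M\<^sup>2 * MB) \<le> L * t * (norm (d k))\<^sup>2" for P t k
  proof -
    have n: "0 < (norm (d k))\<^sup>2" using dnz[of k] by simp
    have p: "0 < M\<^sup>2 * MB" using Mpos MBpos by simp
    have "P / (M\<^sup>2 * MB) * (norm (d k))\<^sup>2 \<le> (L * t) * (norm (d k))\<^sup>2" using that by simp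
    then have "P / (M\<^sup>2 * MB) \<le> L * t" using n by (rule mult_right_le_imp_le)
    then show ?thesis using L_pos p by (simp add: divide_le_eq field_simps)
  qed
  have gdd: "(norm (d k))\<^sup>2 / (M\<^sup>2 * MB) \<le> - gd k" for k
    using d_sq[of k] Mpos MBpos by (simp add: divide_le_eq mult.commute)
  obtain amin where amin: "0 < amin" "\<And>k. amin \<le> \<alpha> k"
  proof (cases armijo)
    case True
    define am where "am = min 1 (\<beta> * ((1 - \<sigma>) / (L * (M\<^sup>2 * MB))))"
    have "am \<le> \<alpha> k" for k
    proof -
      have "armijo_backtracking J G \<beta> \<sigma> (x k) (d k) (\<alpha> k)" using linesearch True by simp
      then obtain i where i: "\<alpha> k = \<beta> ^ i" "\<forall>i'<i. \<not> armijo_cond J G \<sigma> (x k) (d k) (\<beta> ^ i')"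
        unfolding armijo_backtracking_def by blast
      show ?thesis
      proof (cases i)
        case 0 then show ?thesis using i unfolding am_def by simp
      next
        case (Suc j)
        define a where "a = \<beta> ^ j"
        have a0: "0 < a" unfolding a_def using ls_params by simp
        have ak: "\<alpha> k = \<beta> * a" unfolding a_def using i Suc by simp
        have fail: "J (x k + a *\<^sub>R d k) > J (x k) + a * \<sigma> * gd k"
          using i(2) Suc unfolding a_def armijo_cond_def gd_def by auto
        define \<phi> where "\<phi> t = J (x k + t *\<^sub>R d k) - J (x k) - t * \<sigma> * gd k" for t
        define \<phi>' where "\<phi>' t = inner (G (x k + t *\<^sub>R d k)) (d k) - \<sigma> * gd k" for t
        have der: "\<forall>t\<in>{0..a}. (\<phi> has_real_derivative \<phi>' t) (at t)"
          unfolding \<phi>_def \<phi>'_def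
          by (auto intro!: derivative_eq_intros line_deriv[OF J_grad])
        have "\<phi>' 0 = (1 - \<sigma>) * gd k" unfolding \<phi>'_def gd_def by (simp add: algebra_simps)
        then have d0: "\<phi>' 0 < 0" using gd_neg[of k] ls_params by (simp add: mult_pos_neg)
        obtain \<xi> where xi: "0 < \<xi>" "\<xi> < a" "\<phi> \<xi> < 0" "\<phi>' \<xi> = 0"
          using min_crit[OF a0 der _ d0] fail unfolding \<phi>_def by auto
        have "\<xi> * \<sigma> * gd k \<le> 0" using xi ls_params gd_np[of k] by (simp add: mult_nonneg_nonpos)
        then have "J (x k + \<xi> *\<^sub>R d k) \<le> J (x 0)" using xi(3) inO[of k] unfolding \<phi>_def by linarith
        then have inO2: "x k + \<xi> *\<^sub>R d k \<in> \<Omega>" unfolding \<Omega>_def by simp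
        have "inner (G (x k + \<xi> *\<^sub>R d k) - G (x k)) (d k) = (1 - \<sigma>) * (- gd k)"
          using xi(4) unfolding \<phi>'_def gd_def by (simp add: inner_diff_left algebra_simps)
        moreover have "inner (G (x k + \<xi> *\<^sub>R d k) - G (x k)) (d k) \<le> L * \<xi> * (norm (d k))\<^sup>2"
          using lip[OF xO[of k] inO2, of "d k"] xi(1) by (simp add: power2_eq_square mult.assoc)
        moreover have "(1 - \<sigma>) * ((norm (d k))\<^sup>2 / (M\<^sup>2 * MB)) \<le> (1 - \<sigma>) * (- gd k)"
          using gdd[of k] ls_params by (intro mult_left_mono) auto
        ultimately have "(1 - \<sigma>) * (norm (d k))\<^sup>2 / (M\<^sup>2 * MB) \<le> L * \<xi> * (norm (d k))\<^sup>2"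
          by simp
        then have "(1 - \<sigma>) / (L * (M\<^sup>2 * MB)) \<le> \<xi>" by (rule key_bound)
        then have "\<beta> * ((1 - \<sigma>) / (L * (M\<^sup>2 * MB))) \<le> \<beta> * a"
          using xi(2) ls_params by (intro mult_left_mono) auto
        then show ?thesis unfolding am_def ak by simp
      qed
    qed
    moreover have "0 < am" unfolding am_def using ls_params L_pos Mpos MBpos by simp
    ultimately show ?thesis using that by blast
  next
    case False
    then have eta: "\<sigma> < \<eta>" "\<eta> < 1" using ls_params by auto
    define am where "am = (1 - \<eta>) / (L * (M\<^sup>2 * MB))"
    have "am \<le> \<alpha> k" for k
    proof -
      have "wolfe_powell J G \<sigma> \<eta> (x k) (d k) (\<alpha> k)" using linesearch False by simp
      then have w: "inner (G (x (Suc k))) (d k) \<ge> \<eta> * gd k"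
        using x_step s_def unfolding wolfe_powell_def gd_def by simp
      have "(1 - \<eta>) * (- gd k) \<le> inner (G (x (Suc k)) - G (x k)) (d k)"
        using w unfolding gd_def by (simp add: inner_diff_left algebra_simps)
      moreover have "inner (G (x (Suc k)) - G (x k)) (d k) \<le> L * \<alpha> k * (norm (d k))\<^sup>2"
        using lip[OF xO[of k] xO[of "Suc k"], of "d k"] apos[of k] x_step s_def
        by (simp add: power2_eq_square mult.assoc)
      moreover have "(1 - \<eta>) * ((norm (d k))\<^sup>2 / (M\<^sup>2 * MB)) \<le> (1 - \<eta>) * (- gd k)"
        using gdd[of k] eta by (intro mult_left_mono) auto
      ultimately have "(1 - \<eta>) * (norm (d k))\<^sup>2 / (M\<^sup>2 * MB) \<le> L * \<alpha> k * (norm (d k))\<^sup>2"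
        by simp
      then show ?thesis unfolding am_def by (rule key_bound)
    qed
    moreover have "0 < am" unfolding am_def using eta L_pos Mpos MBpos by simp
    ultimately show ?thesis using that by blast
  qed
  have decJ: "decseq (\<lambda>k. J (x k))" using desc by (simp add: decseq_Suc_iff)
  obtain lb where lb: "\<forall>z. lb \<le> J z" using J_bdd unfolding bdd_below_def by auto
  obtain Js where Js: "(\<lambda>k. J (x k)) \<longlonglongrightarrow> Js" "\<forall>i. Js \<le> J (x i)"
    using decseq_convergent[OF decJ, of lb] lb by auto
  have limJ: "lim (\<lambda>k. J (x k)) = Js" using Js(1) by (rule limI)
  define e where "e k = J (x k) - Js" for k
  have e_nn: "0 \<le> e k" for k using Js(2) unfolding e_def by simp
  have e_dec: "\<sigma> * \<alpha> k * (- gd k) \<le> e k" for k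
  proof -
    have "\<sigma> * \<alpha> k * (- gd k) = - (\<alpha> k * \<sigma> * gd k)" by simp
    then show ?thesis using ls[of k] e_nn[of "Suc k"] unfolding e_def by linarith
  qed
  have e_pos: "0 < e k" for k
  proof -
    have "0 < \<sigma> * \<alpha> k * (- gd k)" using ls_params apos[of k] gd_neg[of k]
      by (intro mult_pos_pos) auto
    then show ?thesis using e_dec[of k] by linarith
  qed
  have PL': "\<mu> * e k \<le> (norm (G (x k)))\<^sup>2" if "k \<ge> kbar" for k
  proof -
    have "e k \<le> (1 / \<mu>) * (norm (G (x k)))\<^sup>2" using PL[rule_format, OF that] unfolding limJ e_def .
    then show ?thesis using mu_pos by (simp add: field_simps)
  qed
  have Bpos: "0 < onorm (B k)" for k
    using onorm_pos_lt[OF Bbl[of k]] Bd[of k] gnz[of k] by force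
  define ck where "ck k = \<sigma> * \<alpha> k * \<mu> / onorm (B k)" for k
  have c5: "J (x (Suc k)) - Js \<le> (1 - ck k) * (J (x k) - Js)" if "k \<ge> kbar" for k
  proof -
    have ob: "0 < onorm (B k)" by (rule Bpos)
    have "\<mu> * e k / onorm (B k) \<le> (norm (G (x k)))\<^sup>2 / onorm (B k)"
      using PL'[OF that] ob by (simp add: divide_right_mono)
    also have "\<dots> \<le> - gd k" using g_sq[of k] ob by (simp add: divide_le_eq mult.commute)
    finally have h: "\<mu> * e k / onorm (B k) \<le> - gd k" .
    have "\<sigma> * \<alpha> k * (\<mu> * e k / onorm (B k)) \<le> \<sigma> * \<alpha> k * (- gd k)"
      using h apos[of k] ls_params by (intro mult_left_mono) auto
    moreover have "\<sigma> * \<alpha> k * (\<mu> * e k / onorm (B k)) = ck k * e k" unfolding ck_def by simp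
    moreover have "\<sigma> * \<alpha> k * (- gd k) = - (\<alpha> k * \<sigma> * gd k)" by simp
    moreover have "(1 - ck k) * (J (x k) - Js) = e k - ck k * e k" unfolding e_def by (simp add: algebra_simps)
    ultimately show ?thesis using ls[of k] unfolding e_def by linarith
  qed
  define q where "q = 1 - \<sigma> * amin * \<mu> / MB"
  have q1: "q < 1" using ls_params amin mu_pos MBpos unfolding q_def by simp
  have qk: "1 - ck k \<le> q" for k
  proof -
    have "\<sigma> * amin * \<mu> \<le> \<sigma> * \<alpha> k * \<mu>" using amin(2)[of k] ls_params mu_pos by simp
    then have "\<sigma> * amin * \<mu> / MB \<le> \<sigma> * \<alpha> k * \<mu> / onorm (B k)"
      using Bpos[of k] MB[of k] ls_params apos[of k] mu_pos by (intro frac_le) auto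
    then show ?thesis unfolding q_def ck_def by simp
  qed
  have sup: "(SUP k\<in>{kbar..}. 1 - ck k) < 1"
  proof -
    have "(SUP k\<in>{kbar..}. 1 - ck k) \<le> q" by (rule cSUP_least) (auto intro: qk)
    then show ?thesis using q1 by simp
  qed
  define q' where "q' = max q 0"
  have q'1: "q' < 1" "0 \<le> q'" unfolding q'_def using q1 by auto
  have e_step: "e (Suc k) \<le> q' * e k" if "k \<ge> kbar" for k
  proof -
    have "e (Suc k) \<le> (1 - ck k) * e k" using c5[OF that] unfolding e_def by simp
    also have "\<dots> \<le> q' * e k" using qk[of k] e_nn[of k] unfolding q'_def
      by (intro mult_right_mono) auto
    finally show ?thesis .
  qed
  have e_pow: "e k \<le> e kbar * q' ^ (k - kbar)" if "kbar \<le> k" for k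
    using that
  proof (induction k rule: dec_induct)
    case base then show ?case by simp
  next
    case (step n)
    have "e (Suc n) \<le> q' * e n" using e_step step by simp
    also have "\<dots> \<le> q' * (e kbar * q' ^ (n - kbar))" using step q'1 by (intro mult_left_mono) auto
    also have "\<dots> = e kbar * q' ^ (Suc n - kbar)" using step by (simp add: Suc_diff_le)
    finally show ?case .
  qed
  define r where "r = max (sqrt q') (1/2)"
  have r: "0 < r" "r < 1" unfolding r_def using q'1 by auto
  define R where "R = sqrt (e kbar) / r ^ kbar"
  have R0: "0 \<le> R" unfolding R_def using r e_nn by simp
  have sq_e: "sqrt (e k) \<le> R * r ^ k" if "kbar \<le> k" for k
  proof -
    have "sqrt (e k) \<le> sqrt (e kbar * q' ^ (k - kbar))" using e_pow[OF that] by simp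
    also have "\<dots> = sqrt (e kbar) * sqrt q' ^ (k - kbar)" by (simp add: real_sqrt_mult real_sqrt_power)
    also have "\<dots> \<le> sqrt (e kbar) * r ^ (k - kbar)"
      unfolding r_def using q'1 e_nn[of kbar] by (intro mult_left_mono power_mono) auto
    also have "\<dots> = R * r ^ k" unfolding R_def using r that by (simp add: power_diff)
    finally show ?thesis .
  qed
  define Cg where "Cg = sqrt (MB / (\<sigma> * amin))"
  have bg: "norm (G (x k)) \<le> Cg * R * r ^ k" if "kbar \<le> k" for k
  proof -
    have "\<sigma> * amin * (- gd k) \<le> \<sigma> * \<alpha> k * (- gd k)"
      using amin(2)[of k] ls_params gd_np[of k] by (intro mult_right_mono) auto
    then have "\<sigma> * amin * (- gd k) \<le> e k" using e_dec[of k] by linarith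
    then have "- gd k \<le> e k / (\<sigma> * amin)" using ls_params amin by (simp add: field_simps)
    then have "MB * (- gd k) \<le> MB * (e k / (\<sigma> * amin))" using MBpos by (intro mult_left_mono) auto
    then have "(norm (G (x k)))\<^sup>2 \<le> MB / (\<sigma> * amin) * e k" using g_sqM[of k] by simp
    then have "sqrt ((norm (G (x k)))\<^sup>2) \<le> sqrt (MB / (\<sigma> * amin) * e k)"
      using real_sqrt_le_mono by blast
    then have "norm (G (x k)) \<le> Cg * sqrt (e k)" unfolding Cg_def by (simp only: real_sqrt_mult real_sqrt_abs abs_norm_cancel)
    also have "\<dots> \<le> Cg * (R * r ^ k)" using sq_e[OF that] MBpos ls_params amin unfolding Cg_def by (intro mult_left_mono) auto
    finally show ?thesis by simp
  qed
  define c where "c = M\<^sup>2 * MB / \<sigma>"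
  define Cs where "Cs = sqrt (MB\<^sup>2 * c\<^sup>2 / \<mu>)"
  have bs: "norm (s k) \<le> Cs * R * r ^ k" if "kbar \<le> k" for k
  proof -
    have ns: "norm (s k) = \<alpha> k * norm (d k)" using s_def apos[of k] by simp
    have "\<alpha> k * (norm (d k))\<^sup>2 \<le> \<alpha> k * (M\<^sup>2 * MB * (- gd k))"
      using d_sq[of k] apos[of k] by (intro mult_left_mono) auto
    also have "\<dots> = c * (\<sigma> * \<alpha> k * (- gd k))" unfolding c_def using ls_params by simp
    also have "\<dots> \<le> c * e k" using e_dec[of k] ls_params Mpos MBpos unfolding c_def
      by (intro mult_left_mono) auto
    finally have F1: "\<alpha> k * (norm (d k))\<^sup>2 \<le> c * e k" .
    have "(\<alpha> k * norm (d k))\<^sup>2 \<le> (MB\<^sup>2 * c\<^sup>2 / \<mu>) * e k"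
      using s_bound_aux[OF apos[of k] _ e_pos[of k] mu_pos MBpos _ F1 _ gB[of k] PL'[OF that]]
        dnz[of k] ls_params Mpos MBpos unfolding c_def by simp
    then have "sqrt ((\<alpha> k * norm (d k))\<^sup>2) \<le> sqrt ((MB\<^sup>2 * c\<^sup>2 / \<mu>) * e k)"
      using real_sqrt_le_mono by blast
    moreover have "sqrt ((\<alpha> k * norm (d k))\<^sup>2) = \<alpha> k * norm (d k)" using apos[of k] by simp
    moreover have "sqrt ((MB\<^sup>2 * c\<^sup>2 / \<mu>) * e k) = Cs * sqrt (e k)"
      unfolding Cs_def by (rule real_sqrt_mult)
    ultimately have "norm (s k) \<le> Cs * sqrt (e k)" unfolding ns by simp
    also have "\<dots> \<le> Cs * (R * r ^ k)" using sq_e[OF that] mu_pos unfolding Cs_def by (intro mult_left_mono) auto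
    finally show ?thesis by simp
  qed
  have Cs0: "0 \<le> Cs" unfolding Cs_def using mu_pos by simp
  have Cg0: "0 \<le> Cg" unfolding Cg_def using MBpos ls_params amin by simp
  define Bk where "Bk k = Cs * R * r ^ k / (1 - r)" for k
  have tail: "norm (x n - x k) \<le> Cs * R * (r ^ k - r ^ n) / (1 - r)" if "kbar \<le> k" "k \<le> n" for k n
    using that(2)
  proof (induction n rule: dec_induct)
    case base then show ?case by simp
  next
    case (step n)
    have "norm (x (Suc n) - x k) = norm ((x n - x k) + s n)" using x_step by (simp add: algebra_simps)
    also have "\<dots> \<le> norm (x n - x k) + norm (s n)" by (rule norm_triangle_ineq)
    also have "\<dots> \<le> Cs * R * (r ^ k - r ^ n) / (1 - r) + Cs * R * r ^ n"
      using step bs[of n] that by (intro add_mono) auto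
    also have "\<dots> = Cs * R * (r ^ k - r ^ Suc n) / (1 - r)"
      using r by (simp add: field_simps)
    finally show ?case .
  qed
  have tail2: "norm (x n - x k) \<le> Bk k" if "kbar \<le> k" "k \<le> n" for k n
  proof -
    have "Cs * R * (r ^ k - r ^ n) \<le> Cs * R * r ^ k"
      using Cs0 R0 r by (intro mult_left_mono) auto
    then have "Cs * R * (r ^ k - r ^ n) / (1 - r) \<le> Cs * R * r ^ k / (1 - r)"
      using r by (intro divide_right_mono) auto
    then show ?thesis using tail[OF that] unfolding Bk_def by linarith
  qed
  have Bk0: "Bk \<longlonglongrightarrow> 0"
    unfolding Bk_def using r
    by (auto intro!: tendsto_divide_zero tendsto_mult_right_zero LIMSEQ_power_zero)
  have "Cauchy x"
  proof (rule metric_CauchyI)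
    fix \<epsilon> :: real assume e: "0 < \<epsilon>"
    have e2: "0 < \<epsilon> / 2" using e by simp
    have "\<forall>\<^sub>F k in sequentially. Bk k < \<epsilon> / 2" by (rule order_tendstoD(2)[OF Bk0 e2])
    moreover have "\<forall>\<^sub>F k in sequentially. kbar \<le> k" by (rule eventually_ge_at_top)
    ultimately have "\<forall>\<^sub>F k in sequentially. Bk k < \<epsilon> / 2 \<and> kbar \<le> k" by (rule eventually_conj)
    then obtain N where N: "\<forall>n\<ge>N. Bk n < \<epsilon> / 2 \<and> kbar \<le> n" unfolding eventually_sequentially by blast
    show "\<exists>M. \<forall>m\<ge>M. \<forall>n\<ge>M. dist (x m) (x n) < \<epsilon>"
    proof (intro exI allI impI)
      fix m n assume mn: "N \<le> m" "N \<le> n"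
      have "dist (x m) (x n) \<le> norm (x m - x N) + norm (x n - x N)"
        using dist_triangle2[of "x m" "x n" "x N"] by (simp add: dist_norm)
      also have "\<dots> \<le> Bk N + Bk N" using tail2[of N m] tail2[of N n] N mn by (intro add_mono) auto
      also have "\<dots> < \<epsilon>" using N by auto
      finally show "dist (x m) (x n) < \<epsilon>" .
    qed
  qed
  then obtain xs where xlim: "x \<longlonglongrightarrow> xs" using Cauchy_convergent_iff convergent_def by blast
  have xbound: "norm (x k - xs) \<le> (Cs * R / (1 - r)) * r ^ k" if "kbar \<le> k" for k
  proof -
    have "(\<lambda>n. norm (x n - x k)) \<longlonglongrightarrow> norm (xs - x k)"
      by (intro tendsto_norm tendsto_diff xlim tendsto_const)
    then have "norm (xs - x k) \<le> Bk k"
      by (rule LIMSEQ_le_const2) (use tail2[OF that] in auto)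
    then show ?thesis unfolding Bk_def by (simp add: norm_minus_commute)
  qed
  have glim: "(\<lambda>k. G (x k)) \<longlonglongrightarrow> 0"
  proof (rule Lim_null_comparison)
    show "\<forall>\<^sub>F k in sequentially. norm (G (x k)) \<le> Cg * R * r ^ k"
      using bg unfolding eventually_sequentially by blast
    show "(\<lambda>k. Cg * R * r ^ k) \<longlonglongrightarrow> 0"
      using r by (intro tendsto_mult_right_zero LIMSEQ_power_zero) auto
  qed
  have "isCont G xs" using G_cont continuous_on_eq_continuous_at[OF open_UNIV] by blast
  then have "(\<lambda>k. G (x k)) \<longlonglongrightarrow> G xs" using xlim by (rule isCont_tendsto_compose)
  then have Gxs: "G xs = 0" using glim LIMSEQ_unique by blast
  have "isCont J xs" using J_grad has_derivative_continuous by blast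
  then have "(\<lambda>k. J (x k)) \<longlonglongrightarrow> J xs" using xlim by (rule isCont_tendsto_compose)
  then have Jxs: "Js = J xs" using Js(1) LIMSEQ_unique by blast
  have rx: "r_linear x xs"
    by (rule r_linear_eventually[OF r, of kbar _ _ "Cs * R / (1 - r)"]) (use xbound in auto)
  have rg: "r_linear (\<lambda>k. G (x k)) 0"
    by (rule r_linear_eventually[OF r, of kbar _ _ "Cg * R"]) (use bg in auto)
  show ?thesis
    using Gxs limJ Jxs rx rg c5 sup unfolding ck_def
    by (intro exI[of _ xs]) auto
qed

end
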